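(* Let $G$ be a torsion-free group and $\mathcal F\subset\mathcal P_G$ a left-invariant ideal. Then for every limit ordinal $\alpha$ (including $\alpha=0$) the family $\tau^{<\alpha}(\mathcal F)$ is additive. In particular, the thin-completion $\tau^*(\mathcal F)$ is a (left-invariant) ideal in $\mathcal P_G$.
   Context: $\mathcal P_G$ is the family of all subsets of $G$; $e$ is the neutral element. A family $\mathcal F\subset\mathcal P_G$ is left-invariant if $xF\in\mathcal F$ for all $F\in\mathcal F$, $x\in G$; lower if $A\subset B\in\mathcal F$ implies $A\in\mathcal F$; additive if $A\cup B\in\mathcal F$ for all $A,B\in\mathcal F$; an ideal if it is lower and additive. For a left-invariant lower family $\mathcal F$: $\tau(\mathcal F)=\{A\subset G: xA\cap yA\in\mathcal F$ for all distinct $x,y\in G\}$; $\tau^0(\mathcal F)=\mathcal F$, $\tau^{<\alpha}(\mathcal F)=\bigcup_{\beta<\alpha}\tau^\beta(\mathcal F)$ and $\tau^\alpha(\mathcal F)=\tau(\tau^{<\alpha}(\mathcal F))$ for $\alpha>0$. $\mathcal F$ is thin-complete if $\tau(\mathcal F)=\mathcal F$; the thin-completion $\tau^*(\mathcal F)$ is the smallest thin-complete family containing $\mathcal F$; it equals $\bigcup_{\alpha<|G|^+}\tau^\alpha(\mathcal F)$. A group is torsion-free if every non-neutral element has infinite order. *)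

theory Defs
  imports "HOL-Algebra.Coset"
begin

definition torsion_free :: "('a, 'b) monoid_scheme \<Rightarrow> bool" where
  "torsion_free G \<longleftrightarrow>
     (\<forall>g\<in>carrier G. g \<noteq> \<one>\<^bsub>G\<^esub> \<longrightarrow> (\<forall>n::nat. n > 0 \<longrightarrow> g [^]\<^bsub>G\<^esub> n \<noteq> \<one>\<^bsub>G\<^esub>))"

definition left_invariant :: "('a, 'b) monoid_scheme \<Rightarrow> 'a set set \<Rightarrow> bool" where
  "left_invariant G \<F> \<longleftrightarrow> (\<forall>F\<in>\<F>. \<forall>x\<in>carrier G. x <#\<^bsub>G\<^esub> F \<in> \<F>)"

definition lower_family :: "'a set set \<Rightarrow> bool" where
  "lower_family \<F> \<longleftrightarrow> (\<forall>A B. A \<subseteq> B \<and> B \<in> \<F> \<longrightarrow> A \<in> \<F>)"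

definition additive_family :: "'a set set \<Rightarrow> bool" where
  "additive_family \<F> \<longleftrightarrow> (\<forall>A\<in>\<F>. \<forall>B\<in>\<F>. A \<union> B \<in> \<F>)"

definition ideal_family :: "'a set set \<Rightarrow> bool" where
  "ideal_family \<F> \<longleftrightarrow> lower_family \<F> \<and> additive_family \<F>"

definition tau :: "('a, 'b) monoid_scheme \<Rightarrow> 'a set set \<Rightarrow> 'a set set" where
  "tau G \<F> = {A. A \<subseteq> carrier G \<and>
     (\<forall>x\<in>carrier G. \<forall>y\<in>carrier G. x \<noteq> y \<longrightarrow> (x <#\<^bsub>G\<^esub> A) \<inter> (y <#\<^bsub>G\<^esub> A) \<in> \<F>)}"

text \<open>Transfinite iteration, indexed by an arbitrary well-ordered type standing for
  (an initial segment of) the ordinals: T 0 = F and T alpha = tau (\<Union>beta<alpha. T beta)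
  for alpha > 0.  Such a T exists and is unique by well-founded recursion.\<close>
definition tau_hierarchy ::
  "('a, 'b) monoid_scheme \<Rightarrow> 'a set set \<Rightarrow> ('o::wellorder \<Rightarrow> 'a set set) \<Rightarrow> bool" where
  "tau_hierarchy G \<F> T \<longleftrightarrow>
     (\<forall>\<alpha>. T \<alpha> = (if (\<forall>\<beta>. \<alpha> \<le> \<beta>) then \<F> else tau G (\<Union>\<beta>\<in>{..<\<alpha>}. T \<beta>)))"

definition tau_below :: "('o::wellorder \<Rightarrow> 'a set set) \<Rightarrow> 'o \<Rightarrow> 'a set set" where
  "tau_below T \<alpha> = (\<Union>\<beta>\<in>{..<\<alpha>}. T \<beta>)"

text \<open>Limit ordinal (including 0): not a successor.\<close>
definition limit_elem :: "'o::wellorder \<Rightarrow> bool" where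
  "limit_elem \<alpha> \<longleftrightarrow> (\<forall>\<beta><\<alpha>. \<exists>\<gamma>. \<beta> < \<gamma> \<and> \<gamma> < \<alpha>)"

definition thin_complete :: "('a, 'b) monoid_scheme \<Rightarrow> 'a set set \<Rightarrow> bool" where
  "thin_complete G \<F> \<longleftrightarrow> tau G \<F> = \<F>"

definition tau_star :: "('a, 'b) monoid_scheme \<Rightarrow> 'a set set \<Rightarrow> 'a set set" where
  "tau_star G \<F> = \<Inter>{\<H>. \<F> \<subseteq> \<H> \<and> \<H> \<subseteq> Pow (carrier G) \<and> left_invariant G \<H> \<and>
                          lower_family \<H> \<and> thin_complete G \<H>}"

end

theory Submission imports Defs begin

definition fu :: "'a set set \<Rightarrow> nat \<Rightarrow> 'a set set" where
  "fu K N = {X. \<exists>\<X>. finite \<X> \<and> \<X> \<noteq> {} \<and> card \<X> \<le> N \<and> \<X> \<subseteq> K \<and> X \<subseteq> \<Union>\<X>}"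

lemma tau_mono: "K \<subseteq> K' \<Longrightarrow> tau G K \<subseteq> tau G K'"
  unfolding tau_def by blast

lemma tau_sub: "tau G K \<subseteq> Pow (carrier G)"
  unfolding tau_def by blast

lemma lcos_mono: "A \<subseteq> B \<Longrightarrow> x <#\<^bsub>G\<^esub> A \<subseteq> x <#\<^bsub>G\<^esub> B"
  unfolding l_coset_def by blast

lemma tau_lower: "lower_family K \<Longrightarrow> lower_family (tau G K)"
  unfolding lower_family_def tau_def
proof (intro allI impI, safe)
  fix A B x y assume l: "\<forall>A B. A \<subseteq> B \<and> B \<in> K \<longrightarrow> A \<in> K" and AB: "A \<subseteq> B" "B \<subseteq> carrier G"
    and h: "\<forall>x\<in>carrier G. \<forall>y\<in>carrier G. x \<noteq> y \<longrightarrow> (x <#\<^bsub>G\<^esub> B) \<inter> (y <#\<^bsub>G\<^esub> B) \<in> K"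
  show "\<And>z. z \<in> A \<Longrightarrow> z \<in> carrier G" using AB by blast
  fix x y assume "x \<in> carrier G" "y \<in> carrier G" "x \<noteq> y"
  then have "(x <#\<^bsub>G\<^esub> B) \<inter> (y <#\<^bsub>G\<^esub> B) \<in> K" using h by blast
  moreover have "(x <#\<^bsub>G\<^esub> A) \<inter> (y <#\<^bsub>G\<^esub> A) \<subseteq> (x <#\<^bsub>G\<^esub> B) \<inter> (y <#\<^bsub>G\<^esub> B)"
    using lcos_mono[OF AB(1)] by blast
  ultimately show "(x <#\<^bsub>G\<^esub> A) \<inter> (y <#\<^bsub>G\<^esub> A) \<in> K" using l by blast
qed

lemma (in group) tau_leftinv: assumes "left_invariant G K" shows "left_invariant G (tau G K)"
  unfolding left_invariant_def
proof (intro ballI)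
  fix A g assume A: "A \<in> tau G K" and g: "g \<in> carrier G"
  have As: "A \<subseteq> carrier G" using A unfolding tau_def by blast
  show "g <# A \<in> tau G K" unfolding tau_def
  proof (intro CollectI conjI ballI impI)
    show "g <# A \<subseteq> carrier G"
      using l_coset_subset_G[OF As g] .
    fix x y assume x: "x \<in> carrier G" and y: "y \<in> carrier G" and xy: "x \<noteq> y"
    have ne: "x \<otimes> g \<noteq> y \<otimes> g" using right_cancel[OF g x y] xy by blast
    have c: "x \<otimes> g \<in> carrier G" "y \<otimes> g \<in> carrier G" using x y g by auto
    have "((x \<otimes> g) <# A) \<inter> ((y \<otimes> g) <# A) \<in> K"
      using A c ne unfolding tau_def by blast
    moreover have "x <# (g <# A) = (x \<otimes> g) <# A" "y <# (g <# A) = (y \<otimes> g) <# A"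
      using lcos_m_assoc[OF As x g] lcos_m_assoc[OF As y g] by auto
    ultimately show "(x <# (g <# A)) \<inter> (y <# (g <# A)) \<in> K" by simp
  qed
qed

lemma sub_tau: assumes "group G" "K \<subseteq> Pow (carrier G)" "lower_family K" "left_invariant G K"
  shows "K \<subseteq> tau G K"
proof
  fix A assume A: "A \<in> K"
  show "A \<in> tau G K" unfolding tau_def
  proof (safe)
    show "\<And>z. z \<in> A \<Longrightarrow> z \<in> carrier G" using A assms(2) by blast
    fix x y assume "x \<in> carrier G" "y \<in> carrier G" "x \<noteq> y"
    then have "x <#\<^bsub>G\<^esub> A \<in> K" using A assms(4) unfolding left_invariant_def by blast
    then show "(x <#\<^bsub>G\<^esub> A) \<inter> (y <#\<^bsub>G\<^esub> A) \<in> K" using assms(3) unfolding lower_family_def by blast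
  qed
qed

lemma funpow_props: assumes "group G" "K \<subseteq> Pow (carrier G)" "lower_family K" "left_invariant G K"
  shows "(tau G ^^ n) K \<subseteq> Pow (carrier G) \<and> lower_family ((tau G ^^ n) K) \<and> left_invariant G ((tau G ^^ n) K)"
proof (induction n)
  case 0 then show ?case using assms by simp
next
  case (Suc n) then show ?case using tau_sub[of G] tau_lower[of "(tau G ^^ n) K" G] group.tau_leftinv[OF assms(1), of "(tau G ^^ n) K"] by simp
qed

lemma funpow_mono: "K \<subseteq> K' \<Longrightarrow> (tau G ^^ n) K \<subseteq> (tau G ^^ n) K'"
proof (induction n)
  case 0 then show ?case by simp
next
  case (Suc n) then show ?case using tau_mono[of "(tau G ^^ n) K" "(tau G ^^ n) K'" G] by simp
qed

lemma funpow_chain: assumes "group G" "K \<subseteq> Pow (carrier G)" "lower_family K" "left_invariant G K"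
  shows "(tau G ^^ n) K \<subseteq> (tau G ^^ (n + j)) K"
proof (induction j)
  case 0 then show ?case by simp
next
  case (Suc j)
  have "(tau G ^^ (n + j)) K \<subseteq> tau G ((tau G ^^ (n + j)) K)"
    using sub_tau[OF assms(1)] funpow_props[OF assms] by blast
  then show ?case using Suc by simp
qed

lemma fu_lower: "lower_family (fu K N)"
  unfolding lower_family_def fu_def by blast

lemma fu_mono: assumes "K \<subseteq> K'" "N \<le> N'" shows "fu K N \<subseteq> fu K' N'"
proof
  fix X assume "X \<in> fu K N"
  then obtain \<X> where X: "finite \<X>" "\<X> \<noteq> {}" "card \<X> \<le> N" "\<X> \<subseteq> K" "X \<subseteq> \<Union>\<X>" unfolding fu_def by blast
  have "card \<X> \<le> N'" using X(3) assms(2) by simp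
  then show "X \<in> fu K' N'" unfolding fu_def using X assms(1) by blast
qed

lemma fu_additive: assumes "additive_family K" "lower_family K" shows "fu K N \<subseteq> K"
proof
  fix X assume "X \<in> fu K N"
  then obtain \<X> where X: "finite \<X>" "\<X> \<noteq> {}" "\<X> \<subseteq> K" "X \<subseteq> \<Union>\<X>" unfolding fu_def by blast
  have "\<Union>\<X> \<in> K" using X(1,2,3)
  proof (induction \<X> rule: finite_ne_induct)
    case (singleton x) then show ?case by simp
  next
    case (insert x F) then show ?case using assms(1) unfolding additive_family_def by simp
  qed
  then show "X \<in> K" using X(4) assms(2) unfolding lower_family_def by blast
qed

lemma fu_two: assumes "A \<in> K" "B \<in> K" shows "A \<union> B \<in> fu K 2"
proof -
  have "card {A,B} \<le> 2" by (simp add: card_insert_if)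
  moreover have "A \<union> B \<subseteq> \<Union>{A,B}" by simp
  moreover note assms
  ultimately show ?thesis unfolding fu_def by (intro CollectI exI[of _ "{A,B}"]) simp
qed

lemma (in group) lc_mem:
  assumes "u \<in> carrier G" "A \<subseteq> carrier G"
  shows "x \<in> u <# A \<longleftrightarrow> x \<in> carrier G \<and> inv u \<otimes> x \<in> A"
proof
  assume "x \<in> u <# A"
  then obtain a where a: "a \<in> A" "x = u \<otimes> a" unfolding l_coset_def by blast
  then have "a \<in> carrier G" using assms by blast
  then show "x \<in> carrier G \<and> inv u \<otimes> x \<in> A" using a assms
    by (simp add: m_assoc[symmetric])
next
  assume h: "x \<in> carrier G \<and> inv u \<otimes> x \<in> A"
  then have "x = u \<otimes> (inv u \<otimes> x)" using assms by (simp add: m_assoc[symmetric])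
  then show "x \<in> u <# A" using h unfolding l_coset_def by blast
qed

lemma (in group) lc_Inter:
  assumes "u \<in> carrier G" "S \<noteq> {}" "S \<subseteq> carrier G" "D \<subseteq> carrier G"
  shows "u <# (\<Inter>g\<in>S. g <# D) = (\<Inter>g\<in>(\<lambda>g. u \<otimes> g) ` S. g <# D)"
proof -
  obtain s where s: "s \<in> S" using assms(2) by blast
  have sub: "(\<Inter>g\<in>S. g <# D) \<subseteq> carrier G"
  proof -
    have "(\<Inter>g\<in>S. g <# D) \<subseteq> s <# D" using s by blast
    also have "\<dots> \<subseteq> carrier G" using l_coset_subset_G[OF assms(4)] s assms(3) by blast
    finally show ?thesis .
  qed
  have "u <# (\<Inter>g\<in>S. g <# D) = (\<Inter>g\<in>S. u <# (g <# D))"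
  proof (intro equalityI subsetI)
    fix x
    have e1: "x \<in> u <# (\<Inter>g\<in>S. g <# D) \<longleftrightarrow> x \<in> carrier G \<and> inv u \<otimes> x \<in> (\<Inter>g\<in>S. g <# D)"
      by (rule lc_mem[OF assms(1) sub])
    have e2: "x \<in> u <# (g <# D) \<longleftrightarrow> x \<in> carrier G \<and> inv u \<otimes> x \<in> g <# D" if "g \<in> S" for g
      using that assms(3) by (intro lc_mem[OF assms(1) l_coset_subset_G[OF assms(4)]]) blast
    {
      assume "x \<in> u <# (\<Inter>g\<in>S. g <# D)"
      then have "x \<in> carrier G \<and> inv u \<otimes> x \<in> (\<Inter>g\<in>S. g <# D)" using e1 by simp
      then show "x \<in> (\<Inter>g\<in>S. u <# (g <# D))" using e2 by simp
    }
    {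
      assume a: "x \<in> (\<Inter>g\<in>S. u <# (g <# D))"
      then have "x \<in> carrier G" using e2[OF s] s by simp
      moreover have "inv u \<otimes> x \<in> (\<Inter>g\<in>S. g <# D)" using a e2 by simp
      ultimately show "x \<in> u <# (\<Inter>g\<in>S. g <# D)" using e1 by simp
    }
  qed
  also have "\<dots> = (\<Inter>g\<in>S. (u \<otimes> g) <# D)"
  proof (rule INF_cong[OF refl])
    fix g assume "g \<in> S"
    then show "u <# (g <# D) = (u \<otimes> g) <# D" using lcos_m_assoc[OF assms(4) assms(1)] assms(3) by blast
  qed
  also have "\<dots> = (\<Inter>g\<in>(\<lambda>g. u \<otimes> g) ` S. g <# D)" by simp
  finally show ?thesis .
qed

lemma (in group) no_fix:
  assumes tf: "torsion_free G" and w: "w \<in> carrier G" "w \<noteq> \<one>"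
    and S: "finite S" "S \<noteq> {}" "S \<subseteq> carrier G"
  shows "(\<lambda>g. w \<otimes> g) ` S \<noteq> S"
proof
  assume eq: "(\<lambda>g. w \<otimes> g) ` S = S"
  obtain s where s: "s \<in> S" using S by blast
  have sc: "s \<in> carrier G" using s S by blast
  have inS: "w [^] n \<otimes> s \<in> S" for n :: nat
  proof (induction n)
    case 0 then show ?case using s sc by simp
  next
    case (Suc n)
    have "w [^] Suc n \<otimes> s = (w \<otimes> w [^] n) \<otimes> s"
      using nat_pow_Suc2[OF w(1)] by metis
    also have "\<dots> = w \<otimes> (w [^] n \<otimes> s)"
      using w sc by (intro m_assoc) auto
    also have "\<dots> \<in> (\<lambda>g. w \<otimes> g) ` S" using Suc by blast
    finally show ?case using eq by simp
  qed
  have "\<not> inj (\<lambda>n::nat. w [^] n \<otimes> s)"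
  proof
    assume "inj (\<lambda>n::nat. w [^] n \<otimes> s)"
    moreover have "finite (range (\<lambda>n::nat. w [^] n \<otimes> s))"
      using inS S(1) by (meson finite_subset image_subsetI)
    ultimately have "finite (UNIV :: nat set)" using finite_imageD by blast
    then show False by simp
  qed
  then obtain n m :: nat where nm: "n \<noteq> m" "w [^] n \<otimes> s = w [^] m \<otimes> s"
    unfolding inj_def by blast
  then have pe: "w [^] n = w [^] m" using w sc by simp
  have "w [^] (n - m) = \<one>" using pow_eq_div2[OF w(1) pe] .
  moreover have "w [^] (m - n) = \<one>" using pow_eq_div2[OF w(1) pe[symmetric]] .
  moreover have "0 < n - m \<or> 0 < m - n" using nm(1) by arith
  ultimately show False using tf w unfolding torsion_free_def by blast
qed

lemma (in group) lcanc: "a \<in> carrier G \<Longrightarrow> x \<in> carrier G \<Longrightarrow> y \<in> carrier G \<Longrightarrow> a \<otimes> x = a \<otimes> y \<Longrightarrow> x = y"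
  by (metis Units_eq Units_l_cancel)

lemma (in group) card_grow:
  assumes tf: "torsion_free G" and uv: "u \<in> carrier G" "v \<in> carrier G" "u \<noteq> v"
    and S: "finite S" "S \<noteq> {}" "S \<subseteq> carrier G"
  shows "card S < card ((\<lambda>g. u \<otimes> g) ` S \<union> (\<lambda>g. v \<otimes> g) ` S)"
proof -
  have inju: "inj_on (\<lambda>g. u \<otimes> g) S" "inj_on (\<lambda>g. v \<otimes> g) S"
    using uv S(3) lcanc unfolding inj_on_def by blast+
  have cu: "card ((\<lambda>g. u \<otimes> g) ` S) = card S" "card ((\<lambda>g. v \<otimes> g) ` S) = card S"
    using card_image[OF inju(1)] card_image[OF inju(2)] by auto
  have ne: "(\<lambda>g. u \<otimes> g) ` S \<noteq> (\<lambda>g. v \<otimes> g) ` S"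
  proof
    assume eq: "(\<lambda>g. u \<otimes> g) ` S = (\<lambda>g. v \<otimes> g) ` S"
    define w where "w = inv u \<otimes> v"
    have wc: "w \<in> carrier G" using uv w_def by simp
    have w1: "w \<noteq> \<one>"
    proof
      assume "w = \<one>"
      then have "u \<otimes> w = u" using uv by simp
      moreover have "u \<otimes> w = v" using uv unfolding w_def by (simp add: m_assoc[symmetric])
      ultimately show False using uv by simp
    qed
    have "(\<lambda>g. w \<otimes> g) ` S = (\<lambda>g. inv u \<otimes> g) ` ((\<lambda>g. v \<otimes> g) ` S)"
      unfolding image_image w_def using uv S(3) by (intro image_cong) (auto simp: m_assoc)
    also have "\<dots> = (\<lambda>g. inv u \<otimes> g) ` ((\<lambda>g. u \<otimes> g) ` S)" using eq by simp
    also have "\<dots> = (\<lambda>g. g) ` S"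
      unfolding image_image using uv S(3) by (intro image_cong) (auto simp: m_assoc[symmetric])
    also have "\<dots> = S" by simp
    finally show False using no_fix[OF tf wc w1 S] by simp
  qed
  have fin: "finite ((\<lambda>g. u \<otimes> g) ` S)" "finite ((\<lambda>g. v \<otimes> g) ` S)" using S(1) by auto
  have "\<not> (\<lambda>g. v \<otimes> g) ` S \<subseteq> (\<lambda>g. u \<otimes> g) ` S"
    using ne card_subset_eq[OF fin(1)] cu by metis
  then have "(\<lambda>g. u \<otimes> g) ` S \<subset> (\<lambda>g. u \<otimes> g) ` S \<union> (\<lambda>g. v \<otimes> g) ` S" by blast
  then have "card ((\<lambda>g. u \<otimes> g) ` S) < card ((\<lambda>g. u \<otimes> g) ` S \<union> (\<lambda>g. v \<otimes> g) ` S)"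
    using fin by (intro psubset_card_mono) auto
  then show ?thesis using cu by simp
qed


lemma (in group) translate:
  assumes tf: "torsion_free G" and D: "D \<subseteq> carrier G" and L: "lower_family L"
    and base: "\<And>S. finite S \<Longrightarrow> S \<subseteq> carrier G \<Longrightarrow> card S = t \<Longrightarrow> (\<Inter>g\<in>S. g <# D) \<in> L"
  shows "finite S \<Longrightarrow> S \<noteq> {} \<Longrightarrow> S \<subseteq> carrier G \<Longrightarrow> t \<le> card S + j \<Longrightarrow> (\<Inter>g\<in>S. g <# D) \<in> (tau G ^^ j) L"
proof (induction j arbitrary: S)
  case 0
  then obtain S' where S': "S' \<subseteq> S" "card S' = t" "finite S'" using obtain_subset_with_card_n[of t S] by auto
  then have "(\<Inter>g\<in>S'. g <# D) \<in> L" using base 0 by blast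
  moreover have "(\<Inter>g\<in>S. g <# D) \<subseteq> (\<Inter>g\<in>S'. g <# D)" using S'(1) by blast
  ultimately show ?case using L unfolding lower_family_def by (simp only: funpow_0)
next
  case (Suc j)
  obtain s where s: "s \<in> S" using Suc.prems by blast
  have sub: "(\<Inter>g\<in>S. g <# D) \<subseteq> carrier G"
  proof -
    have "(\<Inter>g\<in>S. g <# D) \<subseteq> s <# D" using s by blast
    also have "\<dots> \<subseteq> carrier G" using l_coset_subset_G[OF D] s Suc.prems(3) by blast
    finally show ?thesis .
  qed
  have "\<forall>x\<in>carrier G. \<forall>y\<in>carrier G. x \<noteq> y \<longrightarrow> (x <# (\<Inter>g\<in>S. g <# D)) \<inter> (y <# (\<Inter>g\<in>S. g <# D)) \<in> (tau G ^^ j) L"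
  proof (intro ballI impI)
    fix x y assume x: "x \<in> carrier G" and y: "y \<in> carrier G" and xy: "x \<noteq> y"
    define S' where "S' = (\<lambda>g. x \<otimes> g) ` S \<union> (\<lambda>g. y \<otimes> g) ` S"
    have eq: "(x <# (\<Inter>g\<in>S. g <# D)) \<inter> (y <# (\<Inter>g\<in>S. g <# D)) = (\<Inter>g\<in>S'. g <# D)"
      unfolding S'_def lc_Inter[OF x Suc.prems(2,3) D] lc_Inter[OF y Suc.prems(2,3) D] INT_Un ..
    have gr: "card S < card S'" unfolding S'_def using card_grow[OF tf x y xy Suc.prems(1,2,3)] .
    have "finite S'" "S' \<noteq> {}" "S' \<subseteq> carrier G" unfolding S'_def using Suc.prems x y by auto
    moreover have "t \<le> card S' + j" using gr Suc.prems(4) by simp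
    ultimately have "(\<Inter>g\<in>S'. g <# D) \<in> (tau G ^^ j) L" using Suc.IH by blast
    then show "(x <# (\<Inter>g\<in>S. g <# D)) \<inter> (y <# (\<Inter>g\<in>S. g <# D)) \<in> (tau G ^^ j) L"
      using eq by simp
  qed
  then have "(\<Inter>g\<in>S. g <# D) \<in> tau G ((tau G ^^ j) L)"
    using sub unfolding tau_def by blast
  then show ?case by simp
qed

lemma (in group) key:
  assumes tf: "torsion_free G"
  shows "fu (tau G K) m \<subseteq> (tau G ^^ m) (fu K (m * (m+1)^2))"
proof
  fix X assume "X \<in> fu (tau G K) m"
  then obtain \<X> where X: "finite \<X>" "\<X> \<noteq> {}" "card \<X> \<le> m" "\<X> \<subseteq> tau G K" "X \<subseteq> \<Union>\<X>"
    unfolding fu_def by blast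
  have Xc: "X \<subseteq> carrier G" using X(4,5) unfolding tau_def by blast
  have m1: "1 \<le> m" using X(1,2,3) card_gt_0_iff[of \<X>] by simp
  have base: "(\<Inter>g\<in>S. g <# X) \<in> fu K (m * (m+1)^2)"
    if S: "finite S" "S \<subseteq> carrier G" "card S = m + 1" for S
  proof -
    define P where "P = {(g,h). g \<in> S \<and> h \<in> S \<and> g \<noteq> h}"
    define \<Y> where "\<Y> = (\<lambda>(A,g,h). (g <# A) \<inter> (h <# A)) ` (\<X> \<times> P)"
    have Psub: "P \<subseteq> S \<times> S" unfolding P_def by blast
    have finP: "finite P" using finite_subset[OF Psub] S(1) by blast
    have "card \<Y> \<le> card (\<X> \<times> P)" unfolding \<Y>_def by (rule card_image_le) (use X(1) finP in simp)
    also have "\<dots> = card \<X> * card P" by (rule card_cartesian_product)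
    also have "\<dots> \<le> m * card (S \<times> S)"
      using X(3) card_mono[OF _ Psub] S(1) by (intro mult_mono) auto
    also have "\<dots> = m * (m+1)^2" using S(3) by (simp add: card_cartesian_product power2_eq_square)
    finally have cY: "card \<Y> \<le> m * (m+1)^2" .
    have finY: "finite \<Y>" unfolding \<Y>_def using X(1) finP by simp
    obtain g0 where g0: "g0 \<in> S" using S(3) card_gt_0_iff[of S] by fastforce
    have "card (S - {g0}) = m" using S g0 by simp
    then obtain h0 where h0: "h0 \<in> S - {g0}" using m1 card_gt_0_iff[of "S - {g0}"] by fastforce
    obtain A0 where A0: "A0 \<in> \<X>" using X(2) by blast
    have "(A0, g0, h0) \<in> \<X> \<times> P" using A0 g0 h0 unfolding P_def by blast
    then have neY: "\<Y> \<noteq> {}" unfolding \<Y>_def by blast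
    have YK: "\<Y> \<subseteq> K"
    proof
      fix Y assume "Y \<in> \<Y>"
      then obtain p where p: "p \<in> \<X> \<times> P" "Y = (\<lambda>(A,g,h). (g <# A) \<inter> (h <# A)) p" unfolding \<Y>_def by blast
      obtain A g h where "p = (A, g, h)" by (cases p) auto
      with p have "A \<in> \<X>" "(g,h) \<in> P" "Y = (g <# A) \<inter> (h <# A)" by auto
      then show "Y \<in> K" using X(4) S(2) unfolding P_def tau_def by blast
    qed
    have cov: "(\<Inter>g\<in>S. g <# X) \<subseteq> \<Union>\<Y>"
    proof
      fix x assume x: "x \<in> (\<Inter>g\<in>S. g <# X)"
      have "\<forall>g\<in>S. \<exists>A\<in>\<X>. x \<in> g <# A"
      proof
        fix g assume "g \<in> S"
        then have "x \<in> g <# X" using x by blast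
        then obtain a where "a \<in> X" "x = g \<otimes> a" unfolding l_coset_def by blast
        then obtain A where "A \<in> \<X>" "a \<in> A" using X(5) by blast
        then show "\<exists>A\<in>\<X>. x \<in> g <# A" using \<open>x = g \<otimes> a\<close> unfolding l_coset_def by blast
      qed
      then obtain f where f: "\<forall>g\<in>S. f g \<in> \<X> \<and> x \<in> g <# f g" by metis
      have "\<not> inj_on f S"
      proof
        assume "inj_on f S"
        then have "card S \<le> card \<X>" using card_inj_on_le[of f S \<X>] f X(1) by blast
        then show False using S(3) X(3) by simp
      qed
      then obtain g h where gh: "g \<in> S" "h \<in> S" "g \<noteq> h" "f g = f h" unfolding inj_on_def by blast
      then have "(f g, g, h) \<in> \<X> \<times> P" using f unfolding P_def by blast
      moreover have "x \<in> g <# f g" "x \<in> h <# f h" using f gh(1,2) by blast+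
      then have "x \<in> (g <# f g) \<inter> (h <# f g)" using gh(4) by simp
      ultimately show "x \<in> \<Union>\<Y>" unfolding \<Y>_def by force
    qed
    show ?thesis unfolding fu_def using finY neY cY YK cov by blast
  qed
  have "(\<Inter>g\<in>{\<one>}. g <# X) \<in> (tau G ^^ m) (fu K (m * (m+1)^2))"
    by (rule translate[OF tf Xc fu_lower base]) auto
  then show "X \<in> (tau G ^^ m) (fu K (m * (m+1)^2))" using lcos_mult_one[OF Xc] by simp
qed


lemma lower_Union: "(\<And>K. K \<in> \<K> \<Longrightarrow> lower_family K) \<Longrightarrow> lower_family (\<Union>\<K>)"
  unfolding lower_family_def by blast

lemma leftinv_Union: "(\<And>K. K \<in> \<K> \<Longrightarrow> left_invariant G K) \<Longrightarrow> left_invariant G (\<Union>\<K>)"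
  unfolding left_invariant_def by blast

lemma (in group) fin_levels:
  assumes tf: "torsion_free G" and K: "K \<subseteq> Pow (carrier G)" "lower_family K" "left_invariant G K" "additive_family K"
  shows "\<exists>f. fu ((tau G ^^ n) K) m \<subseteq> (tau G ^^ f) K"
proof (induction n arbitrary: m)
  case 0
  show ?case using fu_additive[OF K(4,2)] by (intro exI[of _ 0]) simp
next
  case (Suc n)
  obtain f where f: "fu ((tau G ^^ n) K) (m * (m+1)^2) \<subseteq> (tau G ^^ f) K" using Suc.IH by blast
  have "fu ((tau G ^^ Suc n) K) m = fu (tau G ((tau G ^^ n) K)) m" by simp
  also have "\<dots> \<subseteq> (tau G ^^ m) (fu ((tau G ^^ n) K) (m * (m+1)^2))" by (rule key[OF tf])
  also have "\<dots> \<subseteq> (tau G ^^ m) ((tau G ^^ f) K)" by (rule funpow_mono[OF f])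
  also have "\<dots> = (tau G ^^ (m + f)) K" by (simp add: funpow_add)
  finally show ?case by blast
qed

lemma (in group) omega_union:
  assumes tf: "torsion_free G" and K: "K \<subseteq> Pow (carrier G)" "lower_family K" "left_invariant G K" "additive_family K"
  defines "K' \<equiv> (\<Union>n. (tau G ^^ n) K)"
  shows "K' \<subseteq> Pow (carrier G) \<and> lower_family K' \<and> left_invariant G K' \<and> additive_family K' \<and> K \<subseteq> K' \<and> tau G K \<subseteq> K'"
proof -
  have gp: "group G" by (rule is_group)
  note P = funpow_props[OF gp K(1,2,3)]
  have "K' \<subseteq> Pow (carrier G)" unfolding K'_def using P by blast
  moreover have "lower_family K'" unfolding K'_def using P by (intro lower_Union) blast
  moreover have "left_invariant G K'" unfolding K'_def using P by (intro leftinv_Union) blast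
  moreover have "additive_family K'" unfolding additive_family_def
  proof (intro ballI)
    fix A B assume "A \<in> K'" "B \<in> K'"
    then obtain a b where ab: "A \<in> (tau G ^^ a) K" "B \<in> (tau G ^^ b) K" unfolding K'_def by blast
    define n where "n = max a b"
    have "(tau G ^^ a) K \<subseteq> (tau G ^^ (a + (n - a))) K" "(tau G ^^ b) K \<subseteq> (tau G ^^ (b + (n - b))) K"
      using funpow_chain[OF gp K(1,2,3)] by blast+
    moreover have "a + (n - a) = n" "b + (n - b) = n" unfolding n_def by auto
    ultimately have "A \<in> (tau G ^^ n) K" "B \<in> (tau G ^^ n) K" using ab by auto
    then have "A \<union> B \<in> fu ((tau G ^^ n) K) 2" by (rule fu_two)
    moreover obtain f where "fu ((tau G ^^ n) K) 2 \<subseteq> (tau G ^^ f) K" using fin_levels[OF tf K] by blast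
    ultimately show "A \<union> B \<in> K'" unfolding K'_def by blast
  qed
  moreover have "K \<subseteq> K'" unfolding K'_def by (metis UNIV_I UN_upper funpow_0)
  moreover have "tau G K \<subseteq> K'" unfolding K'_def
  proof -
    have "tau G K = (tau G ^^ 1) K" by simp
    then show "tau G K \<subseteq> (\<Union>n. (tau G ^^ n) K)" by blast
  qed
  ultimately show ?thesis by blast
qed

lemma (in group) star_ideal:
  assumes tf: "torsion_free G" and F: "F \<subseteq> Pow (carrier G)" "left_invariant G F" "ideal_family F"
  shows "ideal_family (tau_star G F) \<and> left_invariant G (tau_star G F)"
proof -
  have gp: "group G" by (rule is_group)
  define \<C> where "\<C> = {\<H>. F \<subseteq> \<H> \<and> \<H> \<subseteq> Pow (carrier G) \<and> left_invariant G \<H> \<and> lower_family \<H> \<and> thin_complete G \<H>}"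
  define Z where "Z = tau_star G F"
  have Zdef: "Z = \<Inter>\<C>" unfolding Z_def tau_star_def \<C>_def ..
  have Fl: "lower_family F" "additive_family F" using F(3) unfolding ideal_family_def by auto
  have powC: "Pow (carrier G) \<in> \<C>"
  proof -
    have li: "left_invariant G (Pow (carrier G))"
      unfolding left_invariant_def using l_coset_subset_G by blast
    have lo: "lower_family (Pow (carrier G))" unfolding lower_family_def by blast
    have "tau G (Pow (carrier G)) = Pow (carrier G)"
      using tau_sub sub_tau[OF gp _ lo li] by blast
    then show ?thesis unfolding \<C>_def thin_complete_def using F(1) li lo by blast
  qed
  have ZP: "Z \<subseteq> Pow (carrier G)" using powC Zdef by blast
  have FZ: "F \<subseteq> Z" unfolding Zdef \<C>_def by blast
  have Zl: "lower_family Z" unfolding Zdef \<C>_def lower_family_def by blast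
  have Zli: "left_invariant G Z" unfolding Zdef \<C>_def left_invariant_def by blast
  have tZ: "tau G Z \<subseteq> Z"
  proof -
    have "tau G Z \<subseteq> H" if "H \<in> \<C>" for H
    proof -
      have "Z \<subseteq> H" using that Zdef by blast
      then have "tau G Z \<subseteq> tau G H" by (rule tau_mono)
      also have "\<dots> = H" using that unfolding \<C>_def thin_complete_def by blast
      finally show ?thesis .
    qed
    then show ?thesis unfolding Zdef by blast
  qed
  define \<K> where "\<K> = {K. F \<subseteq> K \<and> K \<subseteq> Z \<and> K \<subseteq> Pow (carrier G) \<and> lower_family K \<and> left_invariant G K \<and> additive_family K}"
  have "\<forall>C\<in>chains \<K>. \<exists>U\<in>\<K>. \<forall>X\<in>C. X \<subseteq> U"
  proof
    fix C assume C: "C \<in> chains \<K>"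
    show "\<exists>U\<in>\<K>. \<forall>X\<in>C. X \<subseteq> U"
    proof (cases "C = {}")
      case True
      have "F \<in> \<K>" unfolding \<K>_def using FZ F(1,2) Fl by blast
      then show ?thesis using True by blast
    next
      case False
      have Csub: "C \<subseteq> \<K>" and ch: "\<forall>A\<in>C. \<forall>B\<in>C. A \<subseteq> B \<or> B \<subseteq> A"
        using C unfolding chains_def chain_subset_def by auto
      have "\<Union>C \<in> \<K>"
        unfolding \<K>_def
      proof (intro CollectI conjI)
        show "F \<subseteq> \<Union>C" using False Csub unfolding \<K>_def by blast
        show "\<Union>C \<subseteq> Z" using Csub unfolding \<K>_def by blast
        show "\<Union>C \<subseteq> Pow (carrier G)" using Csub unfolding \<K>_def by blast
        show "lower_family (\<Union>C)" using Csub unfolding \<K>_def by (intro lower_Union) blast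
        show "left_invariant G (\<Union>C)" using Csub unfolding \<K>_def by (intro leftinv_Union) blast
        show "additive_family (\<Union>C)" unfolding additive_family_def
        proof (intro ballI)
          fix A B assume "A \<in> \<Union>C" "B \<in> \<Union>C"
          then obtain KA KB where k: "KA \<in> C" "KB \<in> C" "A \<in> KA" "B \<in> KB" by blast
          then have "A \<in> KA \<and> B \<in> KA \<or> A \<in> KB \<and> B \<in> KB" using ch by blast
          moreover have "additive_family KA" "additive_family KB" using k Csub unfolding \<K>_def by blast+
          ultimately show "A \<union> B \<in> \<Union>C" using k unfolding additive_family_def by blast
        qed
      qed
      then show ?thesis by blast
    qed
  qed
  then obtain M where M: "M \<in> \<K>" and Mmax: "\<forall>X\<in>\<K>. M \<subseteq> X \<longrightarrow> X = M"
    using Zorn_Lemma2[of \<K>] by blast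
  have Mp: "F \<subseteq> M" "M \<subseteq> Z" "M \<subseteq> Pow (carrier G)" "lower_family M" "left_invariant G M" "additive_family M"
    using M unfolding \<K>_def by auto
  define M' where "M' = (\<Union>n. (tau G ^^ n) M)"
  have M'p: "M' \<subseteq> Pow (carrier G) \<and> lower_family M' \<and> left_invariant G M' \<and> additive_family M' \<and> M \<subseteq> M' \<and> tau G M \<subseteq> M'"
    unfolding M'_def by (rule omega_union[OF tf Mp(3,4,5,6)])
  have lz: "(tau G ^^ n) M \<subseteq> Z" for n
  proof (induction n)
    case 0 then show ?case using Mp(2) by simp
  next
    case (Suc n)
    then have "tau G ((tau G ^^ n) M) \<subseteq> tau G Z" by (rule tau_mono)
    then show ?case using tZ by simp
  qed
  have "M' \<in> \<K>" unfolding \<K>_def using M'p Mp(1) lz unfolding M'_def by blast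
  then have "M' = M" using Mmax M'p by blast
  then have "tau G M \<subseteq> M" using M'p by blast
  moreover have "M \<subseteq> tau G M" by (rule sub_tau[OF gp Mp(3,4,5)])
  ultimately have "thin_complete G M" unfolding thin_complete_def by blast
  then have "M \<in> \<C>" unfolding \<C>_def using Mp by blast
  then have "Z \<subseteq> M" unfolding Zdef by blast
  then have "Z = M" using Mp(2) by blast
  then have "additive_family Z" using Mp(6) by simp
  then show ?thesis using Zl Zli unfolding Z_def ideal_family_def by blast
qed


context group
begin

lemma hier_eq:
  assumes "tau_hierarchy G F T"
  shows "T a = (if (\<forall>b. a \<le> b) then F else tau G (\<Union>b\<in>{..<a}. T b))"
  using spec[OF assms[unfolded tau_hierarchy_def], of a] .

lemma hier_nonbot:
  assumes "tau_hierarchy G F T" "c < a"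
  shows "T a = tau G (\<Union>b\<in>{..<a}. T b)"
proof -
  have "\<not> a \<le> c" using assms(2) by (simp add: not_le)
  then have "\<not> (\<forall>b. a \<le> b)" by blast
  then show ?thesis using hier_eq[OF assms(1), of a] by (simp only: if_False)
qed

lemma hier_props:
  fixes T :: "'o::wellorder \<Rightarrow> 'a set set"
  assumes H: "tau_hierarchy G F T" and F: "F \<subseteq> Pow (carrier G)" "lower_family F" "left_invariant G F"
  shows "T a \<subseteq> Pow (carrier G) \<and> lower_family (T a) \<and> left_invariant G (T a)"
proof (induction a rule: less_induct)
  case (less a)
  show ?case
  proof (cases "\<forall>b. a \<le> b")
    case True
    then show ?thesis using hier_eq[OF H, of a] F by simp
  next
    case False
    have e: "T a = tau G (\<Union>b\<in>{..<a}. T b)" using hier_eq[OF H, of a] unfolding if_not_P[OF False] .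
    have "lower_family (\<Union>b\<in>{..<a}. T b)" using less by (intro lower_Union) auto
    moreover have "left_invariant G (\<Union>b\<in>{..<a}. T b)" using less by (intro leftinv_Union) auto
    ultimately show ?thesis unfolding e
      using tau_sub[of G "\<Union>b\<in>{..<a}. T b"] tau_lower[of "\<Union>b\<in>{..<a}. T b" G] tau_leftinv[of "\<Union>b\<in>{..<a}. T b"] by blast
  qed
qed

lemma hier_mono:
  fixes T :: "'o::wellorder \<Rightarrow> 'a set set"
  assumes H: "tau_hierarchy G F T" and F: "F \<subseteq> Pow (carrier G)" "lower_family F" "left_invariant G F"
    and le: "e \<le> a"
  shows "T e \<subseteq> T a"
proof (cases "e = a")
  case True then show ?thesis by simp
next
  case False
  then have lt: "e < a" using le by simp
  note P = hier_props[OF H F]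
  define U where "U = (\<Union>b\<in>{..<a}. T b)"
  have "U \<subseteq> Pow (carrier G)" unfolding U_def using P by blast
  moreover have "lower_family U" unfolding U_def using P by (intro lower_Union) auto
  moreover have "left_invariant G U" unfolding U_def using P by (intro leftinv_Union) auto
  ultimately have "U \<subseteq> tau G U" using sub_tau[OF is_group] by blast
  moreover have "T e \<subseteq> U" unfolding U_def using lt by blast
  ultimately show ?thesis using hier_nonbot[OF H lt] unfolding U_def by blast
qed

lemma hier_iter:
  fixes T :: "'o::wellorder \<Rightarrow> 'a set set"
  assumes H: "tau_hierarchy G F T" and lim: "limit_elem al" and g: "c < al"
  shows "\<exists>c'<al. (tau G ^^ m) (T c) \<subseteq> T c'"
proof (induction m)
  case 0 then show ?case using g by (intro exI[of _ c]) simp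
next
  case (Suc m)
  then obtain c' where c': "c' < al" "(tau G ^^ m) (T c) \<subseteq> T c'" by blast
  obtain c'' where c'': "c' < c''" "c'' < al" using lim c'(1) unfolding limit_elem_def by blast
  have "(tau G ^^ Suc m) (T c) \<subseteq> tau G (T c')" using tau_mono[OF c'(2)] by simp
  also have "\<dots> \<subseteq> tau G (\<Union>b\<in>{..<c''}. T b)" using c''(1) by (intro tau_mono) blast
  also have "\<dots> = T c''" using hier_nonbot[OF H c''(1)] by simp
  finally show ?case using c''(2) by blast
qed

lemma hier_main:
  fixes T :: "'o::wellorder \<Rightarrow> 'a set set"
  assumes tf: "torsion_free G" and H: "tau_hierarchy G F T"
    and F: "F \<subseteq> Pow (carrier G)" "lower_family F" "left_invariant G F" "additive_family F"
  shows "\<forall>al. limit_elem al \<and> b < al \<longrightarrow> (\<forall>m. \<exists>c<al. fu (T b) m \<subseteq> T c)"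
proof (induction b rule: less_induct)
  case (less b)
  note P = hier_props[OF H F(1,2,3)]
  show ?case
  proof (intro allI impI)
    fix al m assume alb: "limit_elem al \<and> b < al"
    show "\<exists>c<al. fu (T b) m \<subseteq> T c"
    proof (cases "\<forall>x. b \<le> x")
      case True
      then have "T b = F" using hier_eq[OF H, of b] by simp
      then show ?thesis using fu_additive[OF F(4,2)] alb by blast
    next
      case False
      have e: "T b = tau G (\<Union>x\<in>{..<b}. T x)" using hier_eq[OF H, of b] unfolding if_not_P[OF False] .
      define K where "K = (\<Union>x\<in>{..<b}. T x)"
      define N where "N = m * (m+1)^2"
      have "\<exists>c0<al. fu K N \<subseteq> T c0"
      proof (cases "\<exists>d<b. \<forall>x<b. x \<le> d")
        case True
        then obtain d where d: "d < b" "\<forall>x<b. x \<le> d" by blast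
        have "K = T d"
        proof
          show "K \<subseteq> T d" unfolding K_def using d(2) hier_mono[OF H F(1,2,3)] by blast
          show "T d \<subseteq> K" unfolding K_def using d(1) by blast
        qed
        moreover obtain c0 where "c0 < al" "fu (T d) N \<subseteq> T c0"
          using less.IH[OF d(1)] alb d(1) by (meson order.strict_trans)
        ultimately show ?thesis by blast
      next
        case False
        have limb: "limit_elem b" unfolding limit_elem_def
        proof (intro allI impI)
          fix x assume "x < b"
          then obtain y where "y < b" "\<not> y \<le> x" using False by blast
          then show "\<exists>y. x < y \<and> y < b" by (metis not_le)
        qed
        have addK: "additive_family K" unfolding additive_family_def
        proof (intro ballI)
          fix A B assume "A \<in> K" "B \<in> K"
          then obtain x y where xy: "x < b" "y < b" "A \<in> T x" "B \<in> T y" unfolding K_def by blast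
          define z where "z = max x y"
          have z: "z < b" "x \<le> z" "y \<le> z" using xy unfolding z_def by auto
          have "A \<in> T z" "B \<in> T z" using xy z hier_mono[OF H F(1,2,3)] by blast+
          then have "A \<union> B \<in> fu (T z) 2" by (rule fu_two)
          moreover obtain c where "c < b" "fu (T z) 2 \<subseteq> T c" using less.IH[OF z(1)] limb z(1) by blast
          ultimately show "A \<union> B \<in> K" unfolding K_def by blast
        qed
        have lowK: "lower_family K" unfolding K_def using P by (intro lower_Union) auto
        have liK: "left_invariant G K" unfolding K_def using P by (intro leftinv_Union) auto
        have PK: "K \<subseteq> Pow (carrier G)" unfolding K_def using P by blast
        have "fu K N \<subseteq> K" by (rule fu_additive[OF addK lowK])
        also have "\<dots> \<subseteq> tau G K" by (rule sub_tau[OF is_group PK lowK liK])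
        also have "\<dots> = T b" using e unfolding K_def by simp
        finally show ?thesis using alb by blast
      qed
      then obtain c0 where c0: "c0 < al" "fu K N \<subseteq> T c0" by blast
      have "fu (T b) m = fu (tau G K) m" using e unfolding K_def by simp
      also have "\<dots> \<subseteq> (tau G ^^ m) (fu K N)" unfolding N_def by (rule key[OF tf])
      also have "\<dots> \<subseteq> (tau G ^^ m) (T c0)" by (rule funpow_mono[OF c0(2)])
      finally show ?thesis using hier_iter[OF H _ c0(1), of m] alb by blast
    qed
  qed
qed

end

theorem theorem1p2:
  fixes G :: "('a, 'b) monoid_scheme" and \<F> :: "'a set set"
  assumes "group G"
    and "torsion_free G"
    and "\<F> \<subseteq> Pow (carrier G)"
    and "left_invariant G \<F>"
    and "ideal_family \<F>"
  shows "(\<forall>(T :: 'o::wellorder \<Rightarrow> 'a set set) \<alpha>.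
            tau_hierarchy G \<F> T \<and> limit_elem \<alpha> \<longrightarrow> additive_family (tau_below T \<alpha>))
         \<and> ideal_family (tau_star G \<F>) \<and> left_invariant G (tau_star G \<F>)"
proof (intro conjI)
  interpret group G by fact
  have Fl: "lower_family \<F>" "additive_family \<F>" using assms(5) unfolding ideal_family_def by auto
  show "\<forall>(T :: 'o::wellorder \<Rightarrow> 'a set set) \<alpha>.
            tau_hierarchy G \<F> T \<and> limit_elem \<alpha> \<longrightarrow> additive_family (tau_below T \<alpha>)"
  proof (intro allI impI)
    fix T :: "'o::wellorder \<Rightarrow> 'a set set" and al :: 'o
    assume h: "tau_hierarchy G \<F> T \<and> limit_elem al"
    note M = hier_main[OF assms(2) conjunct1[OF h] assms(3) Fl(1) assms(4) Fl(2)]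
    show "additive_family (tau_below T al)" unfolding additive_family_def tau_below_def
    proof (intro ballI)
      fix A B assume "A \<in> (\<Union>b\<in>{..<al}. T b)" "B \<in> (\<Union>b\<in>{..<al}. T b)"
      then obtain x y where xy: "x < al" "y < al" "A \<in> T x" "B \<in> T y" by blast
      define z where "z = max x y"
      have z: "z < al" "x \<le> z" "y \<le> z" using xy unfolding z_def by auto
      have "A \<in> T z" "B \<in> T z"
        using xy z hier_mono[OF conjunct1[OF h] assms(3) Fl(1) assms(4)] by blast+
      then have "A \<union> B \<in> fu (T z) 2" by (rule fu_two)
      moreover obtain c where "c < al" "fu (T z) 2 \<subseteq> T c" using M h z(1) by blast
      ultimately show "A \<union> B \<in> (\<Union>b\<in>{..<al}. T b)" by blast
    qed
  qed
  show "ideal_family (tau_star G \<F>)" using star_ideal[OF assms(2,3,4,5)] by blast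
  show "left_invariant G (tau_star G \<F>)" using star_ideal[OF assms(2,3,4,5)] by blast
qed

end
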